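(* Let $C\ge 3$ be an integer and $r>0$. Define on $\mathbb{R}^C$ the functions $f(\mathbf{h})=H(\mathrm{softmax}(\mathbf{h}))$, $g_1(\mathbf{h})=\sum_{i=1}^C h_i$, and $g_2(\mathbf{h})=-\frac{r^2}{2}+\sum_{i=1}^C\frac{h_i^2}{2}$. Suppose $\mathbf{h}\in\mathbb{R}^C$ and $\lambda_1,\lambda_2\in\mathbb{R}$ satisfy $$\nabla f(\mathbf{h})+\lambda_1\nabla g_1(\mathbf{h})+\lambda_2\nabla g_2(\mathbf{h})=0.$$ If $\alpha,\beta,\gamma\in\{1,\dots,C\}$ satisfy $h_\alpha\ge h_\beta\ge h_\gamma$, then $h_\alpha=h_\beta$ or $h_\beta=h_\gamma$. (Consequently the coordinates of $\mathbf{h}$ take at most two distinct values.)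
   Context: For $\mathbf{h}=(h_1,\dots,h_C)\in\mathbb{R}^C$, $\mathrm{softmax}(\mathbf{h})\in\mathbb{R}^C$ is the probability vector with entries $y_i=e^{h_i}/\sum_{j=1}^C e^{h_j}$. For a probability vector $\mathbf{y}$, $H(\mathbf{y})=-\sum_{i=1}^C y_i\log y_i$ is its Shannon entropy (natural logarithm). Gradients are with respect to $\mathbf{h}$. *)

theory Defs
  imports "HOL-Analysis.Analysis"
begin

definition softmax :: "real ^ 'n \<Rightarrow> real ^ 'n" where
  "softmax h = (\<chi> i. exp (h $ i) / (\<Sum>j\<in>UNIV. exp (h $ j)))"

definition shannon_entropy :: "real ^ 'n \<Rightarrow> real" where
  "shannon_entropy y = - (\<Sum>i\<in>UNIV. y $ i * ln (y $ i))"

definition ent_f :: "real ^ 'n \<Rightarrow> real" where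
  "ent_f h = shannon_entropy (softmax h)"

definition sum_g1 :: "real ^ 'n \<Rightarrow> real" where
  "sum_g1 h = (\<Sum>i\<in>UNIV. h $ i)"

definition sphere_g2 :: "real \<Rightarrow> real ^ 'n \<Rightarrow> real" where
  "sphere_g2 r h = - (r ^ 2 / 2) + (\<Sum>i\<in>UNIV. (h $ i) ^ 2 / 2)"

end

theory Submission
  imports Defs
begin

lemma phi_deriv:
  fixes cc m l1 l2 :: real
  shows "((\<lambda>x. - (cc * exp x) * (x - m) + l1 + l2 * x) has_real_derivative
          (- (cc * exp x) * (x - m + 1) + l2)) (at x)"
  by (auto intro!: derivative_eq_intros simp: algebra_simps)

lemma phi_deriv2:
  fixes cc m l2 :: real
  shows "((\<lambda>x. - (cc * exp x) * (x - m + 1) + l2) has_real_derivative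
          (- (cc * exp x) * (x - m + 2))) (at x)"
  by (auto intro!: derivative_eq_intros simp: algebra_simps)

lemma rolle_real:
  fixes f f' :: "real \<Rightarrow> real"
  assumes "a < b" "f a = f b" "\<And>x. (f has_real_derivative f' x) (at x)"
  shows "\<exists>z. a < z \<and> z < b \<and> f' z = 0"
proof -
  have c: "continuous_on {a..b} f"
    using assms(3) by (meson DERIV_isCont continuous_at_imp_continuous_on)
  obtain z where "a < z" "z < b" "DERIV f z :> 0"
    using Rolle[OF assms(1,2) c] assms(3) real_differentiable_def by blast
  then show ?thesis using DERIV_unique assms(3) by blast
qed

lemma key:
  fixes h :: "'n::finite \<Rightarrow> real" and Z m l1 l2 :: real
  assumes Z: "Z = (\<Sum>j\<in>UNIV. exp (h j))"
    and m: "m = (\<Sum>j\<in>UNIV. exp (h j) * h j) / Z"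
    and crit: "\<And>k. - (exp (h k) / Z) * (h k - m) + l1 + l2 * h k = 0"
    and ab: "h a \<ge> h b" and bc: "h b \<ge> h c"
  shows "h a = h b \<or> h b = h c"
proof (rule ccontr)
  assume "\<not> ?thesis"
  then have cb: "h c < h b" and ba: "h b < h a" using ab bc by auto
  have Zpos: "Z > 0" unfolding Z by (intro sum_pos) auto
  define cc where "cc = 1 / Z"
  have cpos: "cc > 0" using Zpos cc_def by simp
  define \<phi> where "\<phi> x = - (cc * exp x) * (x - m) + l1 + l2 * x" for x
  define \<phi>' where "\<phi>' x = - (cc * exp x) * (x - m + 1) + l2" for x
  define \<phi>'' where "\<phi>'' x = - (cc * exp x) * (x - m + 2)" for x
  have d1: "\<And>x. (\<phi> has_real_derivative \<phi>' x) (at x)"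
    unfolding \<phi>_def[abs_def] \<phi>'_def by (rule phi_deriv)
  have d2: "\<And>x. (\<phi>' has_real_derivative \<phi>'' x) (at x)"
    unfolding \<phi>'_def[abs_def] \<phi>''_def by (rule phi_deriv2)
  have z: "\<phi> (h k) = 0" for k using crit[of k] unfolding \<phi>_def cc_def by simp
  obtain s where s: "h c < s" "s < h b" "\<phi>' s = 0"
    using rolle_real[OF cb _ d1] z by metis
  obtain t where t: "h b < t" "t < h a" "\<phi>' t = 0"
    using rolle_real[OF ba _ d1] z by metis
  obtain w where w: "s < w" "w < t" "\<phi>'' w = 0"
    using rolle_real[of s t \<phi>' \<phi>''] s t d2 by force
  have "w = m - 2" using w(3) cpos unfolding \<phi>''_def by simp
  then have sm: "s - m + 1 < 0" using w by simp
  have "l2 = (cc * exp s) * (s - m + 1)" using s(3) unfolding \<phi>'_def by simp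
  also have "\<dots> < 0" using sm cpos by (simp add: mult_pos_neg)
  finally have l2neg: "l2 < 0" .
  define x0 where "x0 = Min (range h)"
  have x0le: "x0 \<le> h k" for k unfolding x0_def by simp
  have "x0 \<in> range h" unfolding x0_def by (rule Min_in) auto
  then obtain k0 where k0: "h k0 = x0" by blast
  have N: "(\<Sum>j\<in>UNIV. exp (h j) * h j) = m * Z" using m Zpos by simp
  have S: "(\<Sum>j\<in>UNIV. exp (h j) * (h j - x0)) = (\<Sum>j\<in>UNIV. exp (h j) * h j) - x0 * Z"
    unfolding Z by (simp add: right_diff_distrib sum_subtractf sum_distrib_left mult.commute)
  have "(\<Sum>j\<in>UNIV. exp (h j) * (h j - x0)) > 0"
  proof (rule sum_pos2[where i=a])
    show "0 < exp (h a) * (h a - x0)" using x0le[of c] cb ba by simp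
    show "\<And>i. i \<in> UNIV \<Longrightarrow> 0 \<le> exp (h i) * (h i - x0)" using x0le by simp
  qed auto
  then have "m * Z - x0 * Z > 0" using S N by simp
  then have mx0: "m > x0" using Zpos by (simp add: left_diff_distrib[symmetric] zero_less_mult_iff)
  have lin: "l1 + l2 * h k = (exp (h k) / Z) * (h k - m)" for k
    using crit[of k] by linarith
  have "(exp x0 / Z) * (x0 - m) < 0" using mx0 Zpos by (intro mult_pos_neg) auto
  then have L0: "l1 + l2 * x0 < 0" using lin[of k0] k0 by simp
  have "(\<Sum>k\<in>UNIV. l1 + l2 * h k) \<le> (\<Sum>k\<in>(UNIV::'n set). l1 + l2 * x0)"
    by (rule sum_mono) (use l2neg x0le in \<open>simp add: mult_left_mono_neg\<close>)
  also have "\<dots> < 0" using L0 by (simp add: mult_pos_neg)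
  finally have neg: "(\<Sum>k\<in>UNIV. l1 + l2 * h k) < 0" .
  have "(\<Sum>k\<in>UNIV. l1 + l2 * h k) = (\<Sum>k\<in>UNIV. exp (h k) * h k - m * exp (h k)) / Z"
    using lin by (simp add: sum_divide_distrib algebra_simps)
  also have "\<dots> = 0" using N unfolding Z by (simp add: sum_subtractf sum_distrib_left)
  finally show False using neg by simp
qed

lemma ent_f_eq:
  fixes h :: "real ^ 'n"
  shows "ent_f h = ln (\<Sum>j\<in>UNIV. exp (h $ j)) - (\<Sum>j\<in>UNIV. exp (h $ j) * h $ j) / (\<Sum>j\<in>UNIV. exp (h $ j))"
proof -
  define Z where "Z = (\<Sum>j\<in>UNIV. exp (h $ j))"
  have Zpos: "Z > 0" unfolding Z_def by (intro sum_pos) auto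
  have l: "ln (exp (h $ i) / Z) = h $ i - ln Z" for i using Zpos by (simp add: ln_div)
  have "ent_f h = - (\<Sum>i\<in>UNIV. exp (h $ i) / Z * (h $ i - ln Z))"
    unfolding ent_f_def shannon_entropy_def softmax_def Z_def[symmetric] using l by simp
  also have "\<dots> = - ((\<Sum>i\<in>UNIV. exp (h $ i) * h $ i) / Z - ln Z * ((\<Sum>i\<in>UNIV. exp (h $ i)) / Z))"
    by (simp add: sum_divide_distrib sum_subtractf sum_distrib_left diff_divide_distrib right_diff_distrib mult.commute)
  also have "\<dots> = ln Z - (\<Sum>i\<in>UNIV. exp (h $ i) * h $ i) / Z"
    using Zpos unfolding Z_def by simp
  finally show ?thesis unfolding Z_def .
qed


lemma delta_r: "(x::real) * (if P then 1 else 0) = (if P then x else 0)" by simp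

lemma delta_l: "(if P then 1 else 0) * (x::real) = (if P then x else 0)" by simp

lemma ent_dir:
  fixes h :: "real ^ 'n" and k :: 'n
  defines "Z \<equiv> \<Sum>j\<in>UNIV. exp (h $ j)" and "N \<equiv> \<Sum>j\<in>UNIV. exp (h $ j) * h $ j"
  shows "frechet_derivative ent_f (at h) (axis k 1) = - (exp (h $ k) / Z) * (h $ k - N / Z)"
proof -
  have nth: "\<And>j. ((\<lambda>x::real^'n. x $ j) has_derivative (\<lambda>v. v $ j)) (at h)"
    by (rule bounded_linear_imp_has_derivative) (rule bounded_linear_vec_nth)
  have ex: "\<And>j. ((\<lambda>x::real^'n. exp (x $ j)) has_derivative (\<lambda>v. v $ j * exp (h $ j))) (at h)"
    using has_derivative_exp[OF nth] .
  have dZ: "((\<lambda>x::real^'n. \<Sum>j\<in>UNIV. exp (x $ j)) has_derivative (\<lambda>v. \<Sum>j\<in>UNIV. v $ j * exp (h $ j))) (at h)"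
    by (rule has_derivative_sum) (rule ex)
  have dN: "((\<lambda>x::real^'n. \<Sum>j\<in>UNIV. exp (x $ j) * x $ j) has_derivative
      (\<lambda>v. \<Sum>j\<in>UNIV. exp (h $ j) * v $ j + v $ j * exp (h $ j) * h $ j)) (at h)"
    by (intro has_derivative_sum has_derivative_mult ex nth)
  have Zpos: "Z > 0" unfolding Z_def by (intro sum_pos) auto
  note dl = has_derivative_ln[OF Zpos[unfolded Z_def] dZ]
  note dq = has_derivative_divide[OF dN dZ]
  have Zne: "(\<Sum>j\<in>UNIV. exp (h $ j)) \<noteq> 0" using Zpos Z_def by simp
  note d0 = has_derivative_diff[OF dl dq[OF Zne]]
  have fe: "ent_f = (\<lambda>h::real^'n. ln (\<Sum>j\<in>UNIV. exp (h $ j)) - (\<Sum>j\<in>UNIV. exp (h $ j) * h $ j) / (\<Sum>j\<in>UNIV. exp (h $ j)))"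
    by (rule ext) (rule ent_f_eq)
  have "frechet_derivative ent_f (at h) (axis k 1) = exp (h $ k) * inverse Z - ((exp (h $ k) + exp (h $ k) * h $ k) / Z - N * (inverse Z * (exp (h $ k) * inverse Z)))"
  unfolding fe frechet_derivative_at[OF d0, symmetric]
  by (simp add: axis_def Z_def N_def delta_r delta_l sum.distrib if_distrib[of "\<lambda>u. u * _"] cong: if_cong)
  also have "\<dots> = - (exp (h $ k) / Z) * (h $ k - N / Z)"
    using Zpos by (simp add: field_simps)
  finally show ?thesis .
qed

lemma g1_dir:
  fixes h :: "real ^ 'n" and k :: 'n
  shows "frechet_derivative sum_g1 (at h) (axis k 1) = 1"
proof -
  have nth: "\<And>j. ((\<lambda>x::real^'n. x $ j) has_derivative (\<lambda>v. v $ j)) (at h)"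
    by (rule bounded_linear_imp_has_derivative) (rule bounded_linear_vec_nth)
  have d: "(sum_g1 has_derivative (\<lambda>v. \<Sum>j\<in>UNIV. v $ j)) (at h)"
    unfolding sum_g1_def[abs_def] by (rule has_derivative_sum) (rule nth)
  show ?thesis unfolding frechet_derivative_at[OF d, symmetric]
    by (simp add: axis_def)
qed

lemma g2_dir:
  fixes h :: "real ^ 'n" and k :: 'n
  shows "frechet_derivative (sphere_g2 r) (at h) (axis k 1) = h $ k"
proof -
  have nth: "\<And>j. ((\<lambda>x::real^'n. x $ j) has_derivative (\<lambda>v. v $ j)) (at h)"
    by (rule bounded_linear_imp_has_derivative) (rule bounded_linear_vec_nth)
  have sq: "\<And>j. ((\<lambda>x::real^'n. (x $ j)^2 / 2) has_derivative (\<lambda>v. v $ j * h $ j)) (at h)"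
    by (rule derivative_eq_intros nth refl | simp)+
  have d: "(sphere_g2 r has_derivative (\<lambda>v. 0 + (\<Sum>j\<in>UNIV. v $ j * h $ j))) (at h)"
    unfolding sphere_g2_def[abs_def]
    by (intro has_derivative_add has_derivative_const has_derivative_sum sq)
  show ?thesis unfolding frechet_derivative_at[OF d, symmetric]
    by (simp add: axis_def delta_r delta_l if_distrib[of "\<lambda>u. u * _"] cong: if_cong)
qed

theorem mainTheorem3:
  fixes h :: "real ^ 'n" and r l1 l2 :: real and a b c :: 'n
  assumes "CARD('n) \<ge> 3"
    and "r > 0"
    and "\<forall>v. frechet_derivative ent_f (at h) v + l1 * frechet_derivative sum_g1 (at h) v
              + l2 * frechet_derivative (sphere_g2 r) (at h) v = 0"
    and "h $ a \<ge> h $ b" and "h $ b \<ge> h $ c"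
  shows "h $ a = h $ b \<or> h $ b = h $ c"
proof -
  define Z where "Z = (\<Sum>j\<in>UNIV. exp (h $ j))"
  define m where "m = (\<Sum>j\<in>UNIV. exp (h $ j) * h $ j) / Z"
  have crit: "- (exp (h $ k) / Z) * (h $ k - m) + l1 + l2 * h $ k = 0" for k
    using assms(3)[rule_format, of "axis k 1"] unfolding ent_dir g1_dir g2_dir Z_def m_def
    by simp
  show ?thesis
    using key[where h="\<lambda>j. h $ j" and Z=Z and m=m, OF _ _ crit]
      Z_def m_def crit assms(4,5) by blast
qed
end
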